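(* Let $p$ be a prime and let $f(t)\in\mathbb{Q}_p[[t]]$ with $f'(t)=\sum_{i\ge0}a_it^i\in\mathbb{Z}_p[[t]]$ and constant term $c\in\mathbb{Z}_p$. Let $\lambda=\min\big(\{v_p(a_{i-1}p^{i}/i)\}_{i\geq1}\cup\{v_p(c)\}\big)$ (assumed finite) and let $F(x)=f(px)/p^{\lambda}\in\mathbb{Z}_p[[x]]$ be the associated normalized power series, and assume $F$ converges on $\mathbb{Z}_p$. Fix a positive integer $N$, let $M=\min\{m\in\mathbb{Z}_{\ge1}: m-\lambda-\log_p(m)>N\}$, and write $F=F_M+F_\infty$ where $F_M$ consists of the terms of $F$ of degree at most $M$. Let $r\in\mathbb{Z}/p^N\mathbb{Z}$ be such that $F$ satisfies Hensel's lemma for $r$, and let $\tilde r\in\mathbb{Z}_p$ be the unique zero of $F$ lifting $r$ with $|r-\tilde r|_p<|F_M'(r)|_p$. Then $\tilde r\equiv r \pmod{p^{\,N-v_p(F_M'(r))}}$.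
   Context: $v_p$ is the $p$-adic valuation and $|\cdot|_p$ the $p$-adic absolute value; $\log_p$ is the real logarithm to base $p$. For $G\in\mathbb{Z}_p[[x]]$ converging on $\mathbb{Z}_p$ and $N$ a positive integer, let $\bar G$ denote the reduction of $G$ modulo $p^N$ (evaluation at $r\in\mathbb{Z}/p^N\mathbb{Z}$ means evaluating $G$ at any integer representative of $r$ and reducing mod $p^N$). One says $G$ satisfies Hensel's lemma for $r\in\mathbb{Z}/p^N\mathbb{Z}$ if $\bar G(r)\equiv 0 \pmod{p^N}$ and $\bar G'(r)^2\not\equiv 0\pmod{p^N}$. In the claim, $r$ is identified with an integer representative when computing $|r-\tilde r|_p$, $F_M'(r)$ and $v_p(F_M'(r))$. *)

theory Defs
  imports Complex_Main "HOL-Library.Extended_Nat" "HOL-Computational_Algebra.Primes"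
begin

text \<open>p-adic integers Z_p, represented by their compatible sequences of residues:
  x n is the residue of x modulo p^n (in [0, p^n)).\<close>

definition padic :: "int \<Rightarrow> (nat \<Rightarrow> int) \<Rightarrow> bool" where
  "padic p x \<longleftrightarrow> (\<forall>n. x n = x (Suc n) mod p ^ n)"

definition pof_int :: "int \<Rightarrow> int \<Rightarrow> (nat \<Rightarrow> int)" where
  "pof_int p k = (\<lambda>n. k mod p ^ n)"

definition padd :: "int \<Rightarrow> (nat \<Rightarrow> int) \<Rightarrow> (nat \<Rightarrow> int) \<Rightarrow> (nat \<Rightarrow> int)" where
  "padd p x y = (\<lambda>n. (x n + y n) mod p ^ n)"

definition psub :: "int \<Rightarrow> (nat \<Rightarrow> int) \<Rightarrow> (nat \<Rightarrow> int) \<Rightarrow> (nat \<Rightarrow> int)" where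
  "psub p x y = (\<lambda>n. (x n - y n) mod p ^ n)"

definition pmul :: "int \<Rightarrow> (nat \<Rightarrow> int) \<Rightarrow> (nat \<Rightarrow> int) \<Rightarrow> (nat \<Rightarrow> int)" where
  "pmul p x y = (\<lambda>n. (x n * y n) mod p ^ n)"

text \<open>p-adic valuation v_p on Z_p (infinity for 0); v_p(x) = largest n with x = 0 mod p^n.\<close>
definition pval :: "int \<Rightarrow> (nat \<Rightarrow> int) \<Rightarrow> enat" where
  "pval p x = (if (\<forall>n. x n = 0) then \<infinity> else enat (LEAST n. x (Suc n) \<noteq> 0))"

text \<open>Power series over Z_p are given by coefficient sequences b :: nat => Z_p.
  Partial sums  sum_{i<K} b_i x^i  computed in Z_p.\<close>
definition ps_partial :: "int \<Rightarrow> (nat \<Rightarrow> nat \<Rightarrow> int) \<Rightarrow> (nat \<Rightarrow> int) \<Rightarrow> nat \<Rightarrow> (nat \<Rightarrow> int)" where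
  "ps_partial p b x K = (\<lambda>n. (\<Sum>i<K. b i n * x n ^ i) mod p ^ n)"

definition ps_sums :: "int \<Rightarrow> (nat \<Rightarrow> nat \<Rightarrow> int) \<Rightarrow> (nat \<Rightarrow> int) \<Rightarrow> (nat \<Rightarrow> int) \<Rightarrow> bool" where
  "ps_sums p b x s \<longleftrightarrow> (\<forall>n. \<exists>K0. \<forall>K\<ge>K0. ps_partial p b x K n = s n)"

definition ps_deriv :: "int \<Rightarrow> (nat \<Rightarrow> nat \<Rightarrow> int) \<Rightarrow> (nat \<Rightarrow> nat \<Rightarrow> int)" where
  "ps_deriv p b = (\<lambda>i. pmul p (pof_int p (int (Suc i))) (b (Suc i)))"

definition ps_trunc :: "(nat \<Rightarrow> nat \<Rightarrow> int) \<Rightarrow> nat \<Rightarrow> (nat \<Rightarrow> nat \<Rightarrow> int)" where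
  "ps_trunc b M = (\<lambda>i. if i \<le> M then b i else (\<lambda>n. 0))"

definition hensel_at :: "int \<Rightarrow> nat \<Rightarrow> (nat \<Rightarrow> nat \<Rightarrow> int) \<Rightarrow> int \<Rightarrow> bool" where
  "hensel_at p N b r \<longleftrightarrow>
     (\<exists>s. ps_sums p b (pof_int p r) s \<and> s N = 0) \<and>
     (\<exists>s'. ps_sums p (ps_deriv p b) (pof_int p r) s' \<and> (s' N) ^ 2 mod p ^ N \<noteq> 0)"

text \<open>lambda = min({v_p(a_(i-1) p^i / i)}_(i>=1) union {v_p(c)}),
  using v_p(a p^i / i) = v_p(a) + i - v_p(i).\<close>
definition plambda :: "int \<Rightarrow> (nat \<Rightarrow> nat \<Rightarrow> int) \<Rightarrow> (nat \<Rightarrow> int) \<Rightarrow> enat" where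
  "plambda p a c = min (INF i\<in>{1::nat..}. pval p (a (i - 1)) + enat (i - multiplicity p (int i))) (pval p c)"

definition Mbound :: "int \<Rightarrow> nat \<Rightarrow> nat \<Rightarrow> nat" where
  "Mbound p lam N = (LEAST m::nat. 1 \<le> m \<and> real m - real lam - log (real_of_int p) (real m) > real N)"

end

theory Submission imports Defs begin
lemma pow_taylor_dvd:
  fixes x y :: int
  shows "(x - y)^2 dvd x^Suc i - y^Suc i - of_nat (Suc i) * y^i * (x - y)"
proof (induction i)
  case 0 then show ?case by simp
next
  case (Suc i)
  have "x^Suc (Suc i) - y^Suc (Suc i) - of_nat (Suc (Suc i)) * y^Suc i * (x - y)
      = x * (x^Suc i - y^Suc i - of_nat (Suc i) * y^i * (x - y)) + (x - y)^2 * (of_nat (Suc i) * y^i)"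
    by (simp add: algebra_simps power2_eq_square)
  then show ?case using Suc by (metis dvd_add dvd_mult dvd_triv_left)
qed

lemma core:
  fixes p t \<rho> :: int and B :: "nat \<Rightarrow> int" and N d K' :: nat
  assumes pr: "prime p" and dN: "d < N"
    and Pt: "p^N dvd (\<Sum>i<Suc K'. B i * t^i)"
    and Pr: "p^N dvd (\<Sum>i<Suc K'. B i * \<rho>^i)"
    and h: "p^Suc d dvd t - \<rho>"
    and S1: "p^d dvd (\<Sum>i<K'. of_nat (Suc i) * B (Suc i) * \<rho>^i)"
    and S2: "\<not> p^Suc d dvd (\<Sum>i<K'. of_nat (Suc i) * B (Suc i) * \<rho>^i)"
  shows "p^(N-d) dvd t - \<rho>"
proof (rule ccontr)
  assume nd: "\<not> p^(N-d) dvd t - \<rho>"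
  define S where "S = (\<Sum>i<K'. of_nat (Suc i) * B (Suc i) * \<rho>^i)"
  define hh where "hh = t - \<rho>"
  have eq: "(\<Sum>i<Suc K'. B i * t^i) - (\<Sum>i<Suc K'. B i * \<rho>^i) - hh * S
      = (\<Sum>i<K'. B (Suc i) * (t^Suc i - \<rho>^Suc i - of_nat (Suc i) * \<rho>^i * (t - \<rho>)))"
    unfolding S_def hh_def sum.lessThan_Suc_shift
    by (simp add: sum_subtractf[symmetric] sum_distrib_left algebra_simps)
  have "hh^2 dvd (\<Sum>i<K'. B (Suc i) * (t^Suc i - \<rho>^Suc i - of_nat (Suc i) * \<rho>^i * (t - \<rho>)))"
    unfolding hh_def by (intro dvd_sum dvd_mult) (rule pow_taylor_dvd)
  hence h2: "hh^2 dvd (\<Sum>i<Suc K'. B i * t^i) - (\<Sum>i<Suc K'. B i * \<rho>^i) - hh * S"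
    unfolding eq .
  have nu: "\<not> is_unit p" using pr by (metis not_prime_unit)
  have hne: "hh \<noteq> 0" using nd hh_def by auto
  have Sne: "S \<noteq> 0" using S2 S_def by auto
  define e where "e = multiplicity p hh"
  have mS: "multiplicity p S = d" using S1 S2 unfolding S_def by (rule multiplicity_eqI)
  have ge: "Suc d \<le> e" unfolding e_def using h hne nu unfolding hh_def by (intro multiplicity_geI) auto
  have lt: "e < N - d"
  proof (rule ccontr)
    assume "\<not> e < N - d"
    hence "p^(N-d) dvd hh" unfolding e_def by (simp add: multiplicity_dvd')
    thus False using nd hh_def by simp
  qed
  have "p^e dvd hh" unfolding e_def by (rule multiplicity_dvd)
  hence "(p^e)^2 dvd hh^2" by (simp add: dvd_power_same)
  hence "p^(2*e) dvd hh^2" by (simp add: power_mult[symmetric] mult.commute)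
  moreover have "p^(e+d+1) dvd p^(2*e)" using ge by (intro le_imp_power_dvd) simp
  ultimately have A: "p^(e+d+1) dvd (\<Sum>i<Suc K'. B i * t^i) - (\<Sum>i<Suc K'. B i * \<rho>^i) - hh * S"
    using h2 dvd_trans by blast
  have "p^(e+d+1) dvd p^N" using lt by (intro le_imp_power_dvd) simp
  hence B: "p^(e+d+1) dvd (\<Sum>i<Suc K'. B i * t^i) - (\<Sum>i<Suc K'. B i * \<rho>^i)"
    using Pt Pr dvd_trans dvd_diff by blast
  have "p^(e+d+1) dvd hh * S" using dvd_diff[OF B A] by simp
  hence "e + d + 1 \<le> multiplicity p (hh * S)"
    using hne Sne nu by (intro multiplicity_geI) auto
  moreover have "multiplicity p (hh * S) = e + d"
    using prime_elem_multiplicity_mult_distrib[OF prime_imp_prime_elem[OF pr] hne Sne] mS e_def by simp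
  ultimately show False by simp
qed
lemma padic_self: "padic p x \<Longrightarrow> x n mod p^n = x n"
  unfolding padic_def by (metis mod_mod_trivial)

lemma padic_x0: "padic p x \<Longrightarrow> x 0 = 0"
  unfolding padic_def by (erule allE[of _ 0]) simp

lemma padic_coh:
  assumes "p > 0" "padic p x" "j \<le> n"
  shows "x j = x n mod p^j"
  using assms(3)
proof (induction n)
  case 0 then show ?case using padic_x0[OF assms(2)] by simp
next
  case (Suc n)
  show ?case
  proof (cases "j = Suc n")
    case True
    then show ?thesis using padic_self[OF assms(2), of "Suc n"] by (simp del: power_Suc)
  next
    case False
    hence "j \<le> n" using Suc by simp
    hence "x j = x n mod p^j" using Suc by simp
    also have "x n = x (Suc n) mod p^n" using assms(2) unfolding padic_def by blast
    also have "(x (Suc n) mod p^n) mod p^j = x (Suc n) mod p^j"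
      using \<open>j \<le> n\<close> by (intro mod_mod_cancel le_imp_power_dvd)
    finally show ?thesis .
  qed
qed

lemma padic_form:
  assumes "\<And>n. X n = u n mod p^n" "\<And>n. u n mod p^n = u (Suc n) mod p^n"
  shows "padic p X"
  unfolding padic_def
proof
  fix n
  have "X n = u (Suc n) mod p^n" using assms by simp
  also have "\<dots> = (u (Suc n) mod p^Suc n) mod p^n"
    by (intro mod_mod_cancel[symmetric] le_imp_power_dvd) simp
  finally show "X n = X (Suc n) mod p ^ n" using assms(1) by simp
qed

lemma padic_pof_int: "padic p (pof_int p k)"
  by (rule padic_form[where u="\<lambda>n. k"]) (auto simp: pof_int_def)

lemma padic_zero: "padic p (\<lambda>n. 0)"
  by (simp add: padic_def)

lemma padic_step: "p > 0 \<Longrightarrow> padic p x \<Longrightarrow> x n mod p^n = x (Suc n) mod p^n"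
  using padic_coh[of p x n "Suc n"] padic_self[of p x n] by simp

lemma modprod: "((a::int) * b^i) mod m = ((a mod m) * (b mod m)^i) mod m"
proof -
  have "((a mod m) * (b mod m)^i) mod m = ((a mod m) * ((b mod m)^i mod m)) mod m" by (simp add: mod_mult_right_eq)
  also have "(b mod m)^i mod m = b^i mod m" by (simp add: power_mod)
  also have "((a mod m) * (b^i mod m)) mod m = (a * b^i) mod m" by (simp add: mod_mult_eq)
  finally show ?thesis by simp
qed

lemma modmul2: "(a::int) mod m = a' mod m \<Longrightarrow> b mod m = b' mod m \<Longrightarrow> (a * b) mod m = (a' * b') mod m"
proof -
  assume h: "a mod m = a' mod m" "b mod m = b' mod m"
  have "(a * b) mod m = ((a mod m) * (b mod m)) mod m" by (simp add: mod_mult_eq)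
  also have "\<dots> = ((a' mod m) * (b' mod m)) mod m" using h by simp
  also have "\<dots> = (a' * b') mod m" by (simp add: mod_mult_eq)
  finally show ?thesis .
qed

lemma moddiff2: "(a::int) mod m = a' mod m \<Longrightarrow> b mod m = b' mod m \<Longrightarrow> (a - b) mod m = (a' - b') mod m"
proof -
  assume h: "a mod m = a' mod m" "b mod m = b' mod m"
  have "(a - b) mod m = ((a mod m) - (b mod m)) mod m" by (simp add: mod_diff_eq)
  also have "\<dots> = ((a' mod m) - (b' mod m)) mod m" using h by simp
  also have "\<dots> = (a' - b') mod m" by (simp add: mod_diff_eq)
  finally show ?thesis .
qed

lemma padic_pmul: "p > 0 \<Longrightarrow> padic p x \<Longrightarrow> padic p y \<Longrightarrow> padic p (pmul p x y)"
  unfolding pmul_def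
  by (rule padic_form[where u="\<lambda>n. x n * y n"], simp) (intro modmul2 padic_step)

lemma padic_psub: "p > 0 \<Longrightarrow> padic p x \<Longrightarrow> padic p y \<Longrightarrow> padic p (psub p x y)"
  unfolding psub_def
  by (rule padic_form[where u="\<lambda>n. x n - y n"], simp) (intro moddiff2 padic_step)

lemma padic_ps_partial:
  assumes "p > 0" "\<And>i. padic p (c i)" "padic p x"
  shows "padic p (ps_partial p c x K)"
  unfolding ps_partial_def
proof (rule padic_form[where u="\<lambda>n. \<Sum>i<K. c i n * x n ^ i"], simp)
  fix n
  have e: "(c i n * x n ^ i) mod p^n = (c i (Suc n) * x (Suc n) ^ i) mod p^n" for i
    using modprod[of "c i n" "x n" i "p^n"] modprod[of "c i (Suc n)" "x (Suc n)" i "p^n"]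
      padic_step[OF assms(1) assms(2)[of i], of n] padic_step[OF assms(1) assms(3), of n] by simp
  have "(\<Sum>i<K. c i n * x n ^ i) mod p ^ n = (\<Sum>i<K. (c i n * x n ^ i) mod p^n) mod p ^ n"
    by (rule mod_sum_eq[symmetric])
  also have "\<dots> = (\<Sum>i<K. (c i (Suc n) * x (Suc n) ^ i) mod p^n) mod p ^ n"
    by (simp only: e)
  also have "\<dots> = (\<Sum>i<K. c i (Suc n) * x (Suc n) ^ i) mod p ^ n"
    by (rule mod_sum_eq)
  finally show "(\<Sum>i<K. c i n * x n ^ i) mod p ^ n = (\<Sum>i<K. c i (Suc n) * x (Suc n) ^ i) mod p ^ n" .
qed

lemma pval_ge_imp: "x 0 = 0 \<Longrightarrow> enat m \<le> pval p x \<Longrightarrow> x m = 0"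
proof -
  assume x0: "x 0 = 0" and le: "enat m \<le> pval p x"
  show "x m = 0"
  proof (cases "\<forall>n. x n = 0")
    case True then show ?thesis by simp
  next
    case False
    hence "m \<le> (LEAST n. x (Suc n) \<noteq> 0)" using le unfolding pval_def by (auto split: if_splits)
    then show ?thesis
    proof (cases m)
      case 0 then show ?thesis using x0 by simp
    next
      case (Suc k)
      hence "k < (LEAST n. x (Suc n) \<noteq> 0)" using \<open>m \<le> _\<close> by simp
      then show ?thesis using Suc not_less_Least by blast
    qed
  qed
qed

lemma pval_fin: "pval p x = enat d \<Longrightarrow> x 0 = 0 \<Longrightarrow> x (Suc d) \<noteq> 0"
proof -
  assume a: "pval p x = enat d" and x0: "x 0 = 0"
  hence nz: "\<not> (\<forall>n. x n = 0)" unfolding pval_def by (auto split: if_splits)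
  then obtain n where "x n \<noteq> 0" by blast
  with x0 obtain k where "x (Suc k) \<noteq> 0" by (cases n) auto
  hence "x (Suc (LEAST n. x (Suc n) \<noteq> 0)) \<noteq> 0" by (rule LeastI)
  moreover have "d = (LEAST n. x (Suc n) \<noteq> 0)" using a nz unfolding pval_def by simp
  ultimately show ?thesis by simp
qed

lemma pval_ge_intro:
  assumes "p > 0" "padic p x" "x m = 0"
  shows "enat m \<le> pval p x"
proof (cases "\<forall>n. x n = 0")
  case True then show ?thesis unfolding pval_def by simp
next
  case False
  have "\<not> (LEAST n. x (Suc n) \<noteq> 0) < m"
  proof
    assume l: "(LEAST n. x (Suc n) \<noteq> 0) < m"
    from False obtain n where "x n \<noteq> 0" by blast
    moreover have "x 0 = 0" using padic_x0[OF assms(2)] .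
    ultimately obtain k where "x (Suc k) \<noteq> 0" by (cases n) auto
    hence ne: "x (Suc (LEAST n. x (Suc n) \<noteq> 0)) \<noteq> 0" by (rule LeastI)
    have "x (Suc (LEAST n. x (Suc n) \<noteq> 0)) = x m mod p ^ (Suc (LEAST n. x (Suc n) \<noteq> 0))"
      using l by (intro padic_coh[OF assms(1,2)]) simp
    then show False using ne assms(3) by simp
  qed
  then show ?thesis using False unfolding pval_def by simp
qed

lemma two_pow_bound: "2 * k \<le> (2::nat)^k + 2"
proof (induction k)
  case (Suc k)
  show ?case
  proof (cases k)
    case 0 then show ?thesis by simp
  next
    case (Suc j)
    have "(2::nat) \<le> 2^k" using Suc by (simp add: Suc_le_eq)
    then show ?thesis using Suc.IH by simp
  qed
qed simp

lemma Mbound_ge: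
  assumes p: "(p::int) > 1"
  shows "N + lam < Mbound p lam N"
proof -
  define k where "k = lam + N + 3"
  define m0 :: nat where "m0 = 2^k"
  have lp: "log (real_of_int p) 2 \<le> 1" using p by simp
  have "log (real_of_int p) (real m0) = real k * log (real_of_int p) 2"
    unfolding m0_def using p by (simp add: log_nat_power)
  also have "\<dots> \<le> real k" using lp by (simp add: mult_left_le)
  finally have l0: "log (real_of_int p) (real m0) \<le> real k" .
  have "2 * k \<le> m0 + 2" unfolding m0_def by (rule two_pow_bound)
  hence "real (2 * k) \<le> real (m0 + 2)" by (rule of_nat_mono)
  hence "2 * real k \<le> real m0 + 2" by simp
  have gt: "real m0 - real lam - log (real_of_int p) (real m0) > real N"
  proof -
    have "real k = real lam + real N + 3" unfolding k_def by simp
    thus ?thesis using l0 \<open>2 * real k \<le> real m0 + 2\<close> by linarith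
  qed
  have m01: "1 \<le> m0" unfolding m0_def by (rule one_le_power) simp
  have ex: "\<exists>m::nat. 1 \<le> m \<and> real m - real lam - log (real_of_int p) (real m) > real N"
    using m01 gt by (intro exI[where x=m0] conjI)
  define M where "M = Mbound p lam N"
  have LM: "1 \<le> M \<and> real M - real lam - log (real_of_int p) (real M) > real N"
    unfolding M_def Mbound_def by (rule LeastI_ex[OF ex])
  have "log (real_of_int p) (real M) \<ge> 0" using p LM by simp
  hence "real M > real N + real lam" using LM by linarith
  thus ?thesis unfolding M_def by linarith
qed

theorem lemma3p6:
  fixes p :: int and a :: "nat \<Rightarrow> nat \<Rightarrow> int" and c :: "nat \<Rightarrow> int"
    and b :: "nat \<Rightarrow> nat \<Rightarrow> int" and N :: nat and r :: int and rt :: "nat \<Rightarrow> int"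
    and lam :: nat
  assumes prime: "prime p"
    and a_Zp: "\<And>i. padic p (a i)"
    and c_Zp: "padic p c"
    and lam_def: "plambda p a c = enat lam"
    and b_Zp: "\<And>i. padic p (b i)"
    and b0: "pmul p (pof_int p (p ^ lam)) (b 0) = c"
    and bi: "\<And>i. i \<ge> 1 \<Longrightarrow>
               pmul p (pof_int p (int i * p ^ lam)) (b i) = pmul p (a (i - 1)) (pof_int p (p ^ i))"
    and conv: "\<And>x. padic p x \<Longrightarrow> \<exists>s. ps_sums p b x s"
    and N_pos: "N \<ge> 1"
    and hensel: "hensel_at p N b r"
    and rt_Zp: "padic p rt"
    and rt_zero: "ps_sums p b rt (\<lambda>n. 0)"
    and rt_close: "pval p (psub p (pof_int p r) rt) >
        pval p (ps_partial p (ps_deriv p (ps_trunc b (Mbound p lam N))) (pof_int p r) (Suc (Mbound p lam N)))"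
  shows "pval p (psub p rt (pof_int p r)) \<ge>
        enat N - pval p (ps_partial p (ps_deriv p (ps_trunc b (Mbound p lam N))) (pof_int p r) (Suc (Mbound p lam N)))"
proof -
  define M where "M = Mbound p lam N"
  define D where "D = ps_partial p (ps_deriv p (ps_trunc b M)) (pof_int p r) (Suc M)"
  have p1: "p > 1" using prime by (simp add: prime_gt_1_int)
  hence p0: "p > 0" by simp
  have MN: "N + lam < M" unfolding M_def using Mbound_ge[OF p1] .
  have goal_red: "enat (N - d) \<le> pval p (psub p rt (pof_int p r))" if dD: "pval p D = enat d" and dN: "d < N" for d
  proof -
    define t where "t = rt N"
    define \<rho> where "\<rho> = r mod p^N"
    have "\<exists>K0. \<forall>K\<ge>K0. ps_partial p b rt K N = 0" using rt_zero unfolding ps_sums_def by (rule spec)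
    then obtain K0 where K0': "\<forall>K\<ge>K0. ps_partial p b rt K N = 0" by (rule exE)
    have K0: "ps_partial p b rt K N = 0" if "K \<ge> K0" for K using K0' that by simp
    have "\<exists>s. ps_sums p b (pof_int p r) s \<and> s N = 0" using hensel unfolding hensel_at_def by (rule conjunct1)
    then obtain s where s: "ps_sums p b (pof_int p r) s" "s N = 0" by (elim exE conjE)
    have "\<exists>K1. \<forall>K\<ge>K1. ps_partial p b (pof_int p r) K N = s N" using s(1) unfolding ps_sums_def by (rule spec)
    then obtain K1 where K1': "\<forall>K\<ge>K1. ps_partial p b (pof_int p r) K N = s N" by (rule exE)
    have K1: "ps_partial p b (pof_int p r) K N = s N" if "K \<ge> K1" for K using K1' that by simp
    define K' where "K' = K0 + K1 + M"
    have Pt: "p^N dvd (\<Sum>i<Suc K'. b i N * t^i)"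
      using K0[of "Suc K'"] unfolding K'_def ps_partial_def t_def by (simp add: mod_eq_0_iff_dvd)
    have Pr: "p^N dvd (\<Sum>i<Suc K'. b i N * \<rho>^i)"
      using K1[of "Suc K'"] s(2) unfolding K'_def ps_partial_def \<rho>_def pof_int_def by (simp add: mod_eq_0_iff_dvd)
    have X0: "psub p (pof_int p r) rt 0 = 0" by (simp add: psub_def)
    have "enat (Suc d) \<le> pval p (psub p (pof_int p r) rt)"
    proof -
      have "enat d < pval p (psub p (pof_int p r) rt)"
        using rt_close dD unfolding M_def[symmetric] D_def[symmetric] by simp
      thus ?thesis by (simp only: Suc_ile_eq)
    qed
    hence "psub p (pof_int p r) rt (Suc d) = 0" using pval_ge_imp[of "psub p (pof_int p r) rt", OF X0] by blast
    hence z0: "(r mod p^Suc d - rt (Suc d)) mod p^Suc d = 0" by (simp add: psub_def pof_int_def)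
    define m where "m = p^Suc d"
    have rtm: "rt (Suc d) = t mod m" unfolding t_def m_def using dN by (intro padic_coh[OF p0 rt_Zp]) simp
    have rhom: "\<rho> mod m = r mod m"
    proof -
      have "p^Suc d dvd p^N" using dN by (intro le_imp_power_dvd) simp
      thus ?thesis unfolding \<rho>_def m_def by (rule mod_mod_cancel)
    qed
    have z: "(r mod m - t mod m) mod m = 0" using z0 rtm unfolding m_def[symmetric] by simp
    have "(\<rho> - t) mod m = (r mod m - t mod m) mod m"
      by (rule moddiff2) (simp_all add: rhom)
    hence "(\<rho> - t) mod m = 0" using z by simp
    hence "m dvd \<rho> - t" by (simp add: mod_eq_0_iff_dvd)
    hence "p^Suc d dvd \<rho> - t" unfolding m_def .
    hence hdv: "p^Suc d dvd t - \<rho>" by (simp add: dvd_diff_commute)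
    have cpad: "padic p (ps_deriv p (ps_trunc b M) i)" for i
      unfolding ps_deriv_def ps_trunc_def using b_Zp padic_zero
      by (intro padic_pmul[OF p0] padic_pof_int) auto
    have Dpad: "padic p D" unfolding D_def by (intro padic_ps_partial[OF p0 cpad padic_pof_int])
    have D0: "D 0 = 0" unfolding D_def ps_partial_def by simp
    have Dd: "D d = 0" using pval_ge_imp[of D d p, OF D0] dD by simp
    have DSd: "D (Suc d) \<noteq> 0" using pval_fin[OF dD D0] .
    have "D d = D N mod p^d" using dN by (intro padic_coh[OF p0 Dpad]) simp
    hence DN1: "p^d dvd D N" using Dd by (simp add: mod_eq_0_iff_dvd)
    have "D (Suc d) = D N mod p^Suc d" using dN by (intro padic_coh[OF p0 Dpad]) simp
    hence DN2: "\<not> p^Suc d dvd D N" using DSd by (simp add: mod_eq_0_iff_dvd)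
    define S where "S = (\<Sum>i<K'. of_nat (Suc i) * b (Suc i) N * \<rho>^i)"
    have high: "p^N dvd int i * b i N" if iM: "M < i" for i
    proof -
      define L where "L = N + lam"
      have iL: "L \<le> i" using iM MN unfolding L_def by simp
      have "pmul p (pof_int p (int i * p ^ lam)) (b i) L = pmul p (a (i - 1)) (pof_int p (p ^ i)) L"
        using bi[of i] iM by simp
      moreover have "p^i mod p^L = 0" using iL by (simp add: le_imp_power_dvd)
      ultimately have "((int i * p^lam) mod p^L * b i L) mod p^L = 0"
        by (simp add: pmul_def pof_int_def)
      hence "(int i * p^lam * b i L) mod p^L = 0" by (simp add: mod_mult_left_eq)
      hence "p^L dvd int i * p^lam * b i L" by (simp add: mod_eq_0_iff_dvd)
      hence "p^lam * p^N dvd p^lam * (int i * b i L)" unfolding L_def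
        by (simp add: power_add mult.commute mult.left_commute)
      hence A: "p^N dvd int i * b i L" using p0 by (simp add: dvd_mult_cancel_left)
      have "b i N = b i L mod p^N" unfolding L_def by (intro padic_coh[OF p0 b_Zp]) simp
      hence "(int i * b i N) mod p^N = (int i * b i L) mod p^N" by (simp add: mod_mult_right_eq)
      thus ?thesis using A by (simp add: mod_eq_0_iff_dvd[symmetric])
    qed
    define g where "g i = (if Suc i \<le> M then of_nat (Suc i) * b (Suc i) N else 0)" for i
    have DNeq: "D N = (\<Sum>i<Suc M. g i * \<rho>^i) mod p^N"
    proof -
      have "D N = (\<Sum>i<Suc M. ps_deriv p (ps_trunc b M) i N * \<rho>^i) mod p^N"
        unfolding D_def ps_partial_def \<rho>_def pof_int_def by simp
      also have "\<dots> = (\<Sum>i<Suc M. (ps_deriv p (ps_trunc b M) i N * \<rho>^i) mod p^N) mod p^N"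
        by (rule mod_sum_eq[symmetric])
      also have "\<dots> = (\<Sum>i<Suc M. (g i * \<rho>^i) mod p^N) mod p^N"
      proof -
        have e: "(ps_deriv p (ps_trunc b M) i N * \<rho>^i) mod p^N = (g i * \<rho>^i) mod p^N" for i
        proof -
          have "ps_deriv p (ps_trunc b M) i N = (int (Suc i) mod p^N * (if Suc i \<le> M then b (Suc i) N else 0)) mod p^N"
            by (simp add: ps_deriv_def ps_trunc_def pmul_def pof_int_def)
          hence "ps_deriv p (ps_trunc b M) i N mod p^N = g i mod p^N"
            unfolding g_def by (simp add: mod_mult_left_eq)
          thus ?thesis by (rule modmul2) simp
        qed
        show ?thesis by (simp only: e)
      qed
      also have "\<dots> = (\<Sum>i<Suc M. g i * \<rho>^i) mod p^N" by (rule mod_sum_eq)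
      finally show ?thesis .
    qed
    have gsum: "(\<Sum>i<Suc M. g i * \<rho>^i) = (\<Sum>i<M. of_nat (Suc i) * b (Suc i) N * \<rho>^i)"
      by (simp add: g_def)
    have "M \<le> K'" unfolding K'_def by simp
    have Ssplit: "S = (\<Sum>i<M. of_nat (Suc i) * b (Suc i) N * \<rho>^i) + (\<Sum>i\<in>{M..<K'}. of_nat (Suc i) * b (Suc i) N * \<rho>^i)"
      unfolding S_def using \<open>M \<le> K'\<close>
      using sum.atLeastLessThan_concat[of 0 M K' "\<lambda>i. of_nat (Suc i) * b (Suc i) N * \<rho>^i"]
      by (simp add: atLeast0LessThan)
    have "p^N dvd (\<Sum>i\<in>{M..<K'}. of_nat (Suc i) * b (Suc i) N * \<rho>^i)"
    proof (intro dvd_sum)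
      fix i assume "i \<in> {M..<K'}"
      hence "p^N dvd int (Suc i) * b (Suc i) N" by (intro high) auto
      thus "p^N dvd of_nat (Suc i) * b (Suc i) N * \<rho>^i" by (rule dvd_mult2)
    qed
    hence "(\<Sum>i\<in>{M..<K'}. of_nat (Suc i) * b (Suc i) N * \<rho>^i) mod p^N = 0" by (simp add: mod_eq_0_iff_dvd)
    moreover have "S mod p^N = ((\<Sum>i<M. of_nat (Suc i) * b (Suc i) N * \<rho>^i) + (\<Sum>i\<in>{M..<K'}. of_nat (Suc i) * b (Suc i) N * \<rho>^i) mod p^N) mod p^N"
      unfolding Ssplit by (rule mod_add_right_eq[symmetric])
    ultimately have "S mod p^N = (\<Sum>i<M. of_nat (Suc i) * b (Suc i) N * \<rho>^i) mod p^N"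
      by simp
    hence "D N mod p^N = S mod p^N" using DNeq gsum by simp
    hence SD: "p^N dvd D N - S" by (simp add: mod_eq_dvd_iff)
    have S1: "p^d dvd S"
    proof -
      have "p^d dvd p^N" using dN by (simp add: le_imp_power_dvd)
      hence "p^d dvd D N - S" using SD dvd_trans by blast
      hence "p^d dvd D N - (D N - S)" by (rule dvd_diff[OF DN1])
      thus ?thesis by simp
    qed
    have S2: "\<not> p^Suc d dvd S"
    proof
      assume a: "p^Suc d dvd S"
      have "p^Suc d dvd p^N" using dN by (intro le_imp_power_dvd) simp
      hence "p^Suc d dvd D N - S" using SD dvd_trans by blast
      hence "p^Suc d dvd (D N - S) + S" by (rule dvd_add[OF _ a])
      hence "p^Suc d dvd D N" by simp
      thus False using DN2 by simp
    qed
    have core_res: "p^(N-d) dvd t - \<rho>"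
      by (rule core[OF prime dN Pt Pr hdv S1[unfolded S_def] S2[unfolded S_def]])
    have Ypad: "padic p (psub p rt (pof_int p r))" by (intro padic_psub[OF p0 rt_Zp padic_pof_int])
    have "rt (N-d) = t mod p^(N-d)" unfolding t_def by (intro padic_coh[OF p0 rt_Zp]) simp
    moreover have "r mod p^(N-d) = \<rho> mod p^(N-d)"
    proof -
      have "p^(N-d) dvd p^N" by (intro le_imp_power_dvd) simp
      thus ?thesis unfolding \<rho>_def by (simp add: mod_mod_cancel)
    qed
    ultimately have "psub p rt (pof_int p r) (N-d) = (t mod p^(N-d) - \<rho> mod p^(N-d)) mod p^(N-d)"
      by (simp add: psub_def pof_int_def)
    also have "\<dots> = (t - \<rho>) mod p^(N-d)" by (simp add: mod_diff_eq)
    also have "\<dots> = 0" using core_res by (simp add: mod_eq_0_iff_dvd)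
    finally show ?thesis by (rule pval_ge_intro[OF p0 Ypad])
  qed
  show ?thesis
  proof (cases "pval p D")
    case (enat d)
    show ?thesis
    proof (cases "d < N")
      case True
      then show ?thesis using goal_red[OF enat True] enat unfolding D_def M_def by simp
    next
      case False
      then show ?thesis using enat unfolding D_def M_def by (simp add: zero_enat_def[symmetric])
    qed
  next
    case infinity
    then show ?thesis unfolding D_def M_def by simp
  qed
qed

end
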